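(* Assume $$0<\Delta t\le\frac{C_a^3}{536\,C_S^2C_{ct}^4C_{tr}^8}.$$ Then there exist $\lambda_1\in(0,1)$, depending only on $\Delta t$, the parameters and the domains, and a constant $C$ independent of $n$, such that every solution of the BDF2 scheme satisfies, for all $n\ge1$, $$\|\bar\partial\vec{\mathbf u}^{n+1}\|^2\le C\lambda_1^n+C\max_i\|\bar\partial\vec{\mathbf f}^i\|^2,$$ where $\bar\partial\vec{\mathbf u}^{n+1}=(\vec{\mathbf u}^{n+1}-\vec{\mathbf u}^n)/\Delta t$ and $\bar\partial\vec{\mathbf f}^{i}=(\vec{\mathbf f}^{i}-\vec{\mathbf f}^{i-1})/\Delta t$.
   Context: Let $d\in\{2,3\}$, $\Omega_f,\Omega_p\subset\mathbb R^d$ bounded Lipschitz domains with disjoint interiors sharing the interface $\Gamma=\partial\Omega_f\cap\partial\Omega_p$; $\mathbf n_f$ is the unit outward normal of $\Omega_f$ on $\Gamma$, $\boldsymbol\tau$ a unit tangent on $\Gamma$ (for $d=3$ the tangential term is summed over $d-1$ tangent vectors). Parameters: $\nu,g,S,\alpha_{BJ}>0$, a symmetric positive definite matrix $\mathbb K$ with smallest eigenvalue $K_{\min}>0$, and $\gamma_f,\gamma_p\ge0$. Spaces: $\mathbf H_f=\{\mathbf v\in H^1(\Omega_f)^d:\mathbf v=0\text{ on }\partial\Omega_f\setminus\Gamma\}$, $H_p=\{\psi\in H^1(\Omega_p):\psi=0\text{ on }\partial\Omega_p\setminus\Gamma\}$, $Q=L^2(\Omega_f)$, $\mathbf W=\mathbf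 H_f\times H_p$, elements written $\vec{\mathbf u}=(\mathbf u,\phi)$, $\vec{\mathbf v}=(\mathbf v,\psi)$. Norms: $\|\vec{\mathbf v}\|^2=\|\mathbf v\|^2_{L^2(\Omega_f)}+\|\psi\|^2_{L^2(\Omega_p)}$, $\|\nabla\vec{\mathbf v}\|^2=\|\nabla\mathbf v\|^2_{L^2(\Omega_f)}+\|\nabla\psi\|^2_{L^2(\Omega_p)}$, $\|\vec{\mathbf v}\|_\Gamma^2=\|\mathbf v\|_{L^2(\Gamma)}^2+\|\psi\|_{L^2(\Gamma)}^2$. Forms: $\langle\langle\vec{\mathbf u},\vec{\mathbf v}\rangle\rangle=(\mathbf u,\mathbf v)_{\Omega_f}+gS(\phi,\psi)_{\Omega_p}$, $\|\vec{\mathbf v}\|_S=\langle\langle\vec{\mathbf v},\vec{\mathbf v}\rangle\rangle^{1/2}$; $a(\vec{\mathbf u},\vec{\mathbf v})=\nu(\nabla\mathbf u,\nabla\mathbf v)_{\Omega_f}+g(\mathbb K\nabla\phi,\nabla\psi)_{\Omega_p}+\alpha_{BJ}(\mathbf u\cdot\boldsymbol\tau,\mathbf v\cdot\boldsymbol\tau)_\Gamma$; $b(\mathbf v,q)=-(q,\nabla\cdot\mathbf v)_{\Omega_f}$; $a_\Gamma(\vec{\mathbf u},\vec{\mathbf v})=g(\phi,\mathbf v\cdot\mathbf n_f)_\Gamma-g(\mathbf u\cdot\mathbf n_f,\psi)_\Gamma$; $a_{st}(\vec{\mathbf u},\vec{\mathbf v})=\gamma_f(\mathbf u\cdot\mathbf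 n_f,\mathbf v\cdot\mathbf n_f)_\Gamma+\gamma_p(\phi,\psi)_\Gamma$; $\widetilde a_\Gamma=a_\Gamma-a_{st}$. A forcing pair is $\vec{\mathbf f}=(\mathbf f,f)\in L^2(\Omega_f)^d\times L^2(\Omega_p)$ with $\langle\langle\langle\vec{\mathbf f},\vec{\mathbf v}\rangle\rangle\rangle=(\mathbf f,\mathbf v)_{\Omega_f}+g(f,\psi)_{\Omega_p}$ and $\|\vec{\mathbf f}\|^2=\|\mathbf f\|^2+\|f\|^2$. Constants: $C_a=\min(\nu,gK_{\min})$; $C_S$ is a constant with $\|\vec{\mathbf v}\|\le C_S\|\vec{\mathbf v}\|_S$; $C_{tr}$ is a constant with $\|\vec{\mathbf v}\|_\Gamma\le C_{tr}(\|\vec{\mathbf v}\|\|\nabla\vec{\mathbf v}\|)^{1/2}$ and $\|\vec{\mathbf v}\|_\Gamma\le C_{tr}\|\nabla\vec{\mathbf v}\|$ for all $\vec{\mathbf v}\in\mathbf W$; $C_{ct}=\sqrt2\max\{\gamma_f,\gamma_p,g\}$. BDF2 scheme: given $\Delta t>0$, $\vec{\mathbf u}^0,\vec{\mathbf u}^1\in\mathbf W$ and forcing pairs $\vec{\mathbf f}^n$, for each $n\ge1$ the pair $(\vec{\mathbf u}^{n+1},p^{n+1})\in\mathbf W\times Q$ satisfies, for all $\vec{\mathbf v}\in\mathbf W$, $q\in Q$, $\langle\langle\frac{3\vec{\mathbf u}^{n+1}-4\vec{\mathbf u}^n+\vec{\mathbf u}^{n-1}}{2\Delta t},\vec{\mathbf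 v}\rangle\rangle+a(\vec{\mathbf u}^{n+1},\vec{\mathbf v})+b(\mathbf v,p^{n+1})+a_{st}(\vec{\mathbf u}^{n+1},\vec{\mathbf v})=\langle\langle\langle\vec{\mathbf f}^{n+1},\vec{\mathbf v}\rangle\rangle\rangle-\widetilde a_\Gamma(2\vec{\mathbf u}^n-\vec{\mathbf u}^{n-1},\vec{\mathbf v})$, and $b(\mathbf u^{n+1},q)=0$. *)

theory Defs
  imports "HOL-Analysis.Analysis"
begin

text \<open>Notation of the arguments:
   Ef : H_f -> L2(Omega_f)^d       (inclusion)
   Ep : H_p -> L2(Omega_p)         (inclusion)
   Df : H_f -> L2(Omega_f)^(d x d) (gradient)
   Dp : H_p -> L2(Omega_p)^d       (gradient)
   Tf : H_f -> L2(Gamma)^d         (trace)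
   Tp : H_p -> L2(Gamma)           (trace)
   Nn : L2(Gamma)^d -> L2(Gamma)   (w |-> w . n_f)
   Tt : L2(Gamma)^d -> L2(Gamma)^(d-1) (w |-> (w . tau_i)_i)
   Dv : H_f -> Q = L2(Omega_f)     (divergence)
   K  : L2(Omega_p)^d -> L2(Omega_p)^d (multiplication by the matrix K)\<close>

definition Kmin :: "('gp::real_inner \<Rightarrow> 'gp) \<Rightarrow> real" where
  "Kmin K = Inf {(K x \<bullet> x) / (norm x)\<^sup>2 | x. x \<noteq> 0}"

definition nrm2 :: "('hf \<Rightarrow> 'lf::real_inner) \<Rightarrow> ('hp \<Rightarrow> 'lp::real_inner) \<Rightarrow> 'hf \<times> 'hp \<Rightarrow> real" where
  "nrm2 Ef Ep w = (norm (Ef (fst w)))\<^sup>2 + (norm (Ep (snd w)))\<^sup>2"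

definition ipS :: "('hf \<Rightarrow> 'lf::real_inner) \<Rightarrow> ('hp \<Rightarrow> 'lp::real_inner) \<Rightarrow> real \<Rightarrow> real \<Rightarrow>
    'hf \<times> 'hp \<Rightarrow> 'hf \<times> 'hp \<Rightarrow> real" where
  "ipS Ef Ep g S u v = Ef (fst u) \<bullet> Ef (fst v) + g * S * (Ep (snd u) \<bullet> Ep (snd v))"

definition ipF :: "('hf \<Rightarrow> 'lf::real_inner) \<Rightarrow> ('hp \<Rightarrow> 'lp::real_inner) \<Rightarrow> real \<Rightarrow>
    'lf \<times> 'lp \<Rightarrow> 'hf \<times> 'hp \<Rightarrow> real" where
  "ipF Ef Ep g f v = fst f \<bullet> Ef (fst v) + g * (snd f \<bullet> Ep (snd v))"

definition fnrm2 :: "'lf::real_inner \<times> 'lp::real_inner \<Rightarrow> real" where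
  "fnrm2 f = (norm (fst f))\<^sup>2 + (norm (snd f))\<^sup>2"

definition aform :: "('hf \<Rightarrow> 'gf::real_inner) \<Rightarrow> ('hp \<Rightarrow> 'gp::real_inner) \<Rightarrow> ('gp \<Rightarrow> 'gp) \<Rightarrow>
    ('hf \<Rightarrow> 'tv::real_inner) \<Rightarrow> ('tv \<Rightarrow> 'tt::real_inner) \<Rightarrow> real \<Rightarrow> real \<Rightarrow> real \<Rightarrow>
    'hf \<times> 'hp \<Rightarrow> 'hf \<times> 'hp \<Rightarrow> real" where
  "aform Df Dp K Tf Tt \<nu> g \<alpha> u v =
     \<nu> * (Df (fst u) \<bullet> Df (fst v)) + g * (K (Dp (snd u)) \<bullet> Dp (snd v))
     + \<alpha> * (Tt (Tf (fst u)) \<bullet> Tt (Tf (fst v)))"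

definition bform :: "('hf \<Rightarrow> 'q::real_inner) \<Rightarrow> 'hf \<Rightarrow> 'q \<Rightarrow> real" where
  "bform Dv v q = - (q \<bullet> Dv v)"

definition aGam :: "('hf \<Rightarrow> 'tv::real_inner) \<Rightarrow> ('hp \<Rightarrow> 'tp::real_inner) \<Rightarrow> ('tv \<Rightarrow> 'tp) \<Rightarrow> real \<Rightarrow>
    'hf \<times> 'hp \<Rightarrow> 'hf \<times> 'hp \<Rightarrow> real" where
  "aGam Tf Tp Nn g u v = g * (Tp (snd u) \<bullet> Nn (Tf (fst v))) - g * (Nn (Tf (fst u)) \<bullet> Tp (snd v))"

definition ast :: "('hf \<Rightarrow> 'tv::real_inner) \<Rightarrow> ('hp \<Rightarrow> 'tp::real_inner) \<Rightarrow> ('tv \<Rightarrow> 'tp) \<Rightarrow> real \<Rightarrow> real \<Rightarrow>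
    'hf \<times> 'hp \<Rightarrow> 'hf \<times> 'hp \<Rightarrow> real" where
  "ast Tf Tp Nn \<gamma>f \<gamma>p u v = \<gamma>f * (Nn (Tf (fst u)) \<bullet> Nn (Tf (fst v))) + \<gamma>p * (Tp (snd u) \<bullet> Tp (snd v))"


definition gnrm2 :: "('hf \<Rightarrow> 'gf::real_inner) \<Rightarrow> ('hp \<Rightarrow> 'gp::real_inner) \<Rightarrow> 'hf \<times> 'hp \<Rightarrow> real" where
  "gnrm2 Df Dp w = (norm (Df (fst w)))\<^sup>2 + (norm (Dp (snd w)))\<^sup>2"

definition tnrm2 :: "('hf \<Rightarrow> 'tv::real_inner) \<Rightarrow> ('hp \<Rightarrow> 'tp::real_inner) \<Rightarrow> 'hf \<times> 'hp \<Rightarrow> real" where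
  "tnrm2 Tf Tp w = (norm (Tf (fst w)))\<^sup>2 + (norm (Tp (snd w)))\<^sup>2"

end

theory Submission
  imports Defs
begin

lemma bdf_id:
  fixes a b c :: "'a::real_inner"
  shows "2*((3*\<^sub>R a - 4*\<^sub>R b + c) \<bullet> a) = (norm a)^2 + (norm (2*\<^sub>R a - b))^2 - (norm b)^2 - (norm (2*\<^sub>R b - c))^2 + (norm (a - 2*\<^sub>R b + c))^2"
  by (simp add: power2_norm_eq_inner inner_simps algebra_simps inner_commute)

lemma young: fixes x y e :: real assumes "0 < e" shows "x*y \<le> e*x^2 + y^2/(4*e)"
proof -
  have "0 \<le> (2*e*x - y)^2" by simp
  hence "(x*y)*(4*e) \<le> 4*e^2*x^2 + y^2" by (simp add: power2_eq_square algebra_simps)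
  also have "4*e^2*x^2 + y^2 = (e*x^2 + y^2/(4*e))*(4*e)" using assms by (simp add: field_simps power2_eq_square)
  finally have "(x*y)*(4*e) \<le> (e*x^2 + y^2/(4*e))*(4*e)" .
  thus ?thesis by (rule mult_right_le_imp_le) (use assms in simp)
qed

lemma tri4: fixes a b c :: real shows "(a + 2*b + c)^2 \<le> 4*(a^2 + 2*b^2 + c^2)"
proof -
  have "0 \<le> 2*(a-b)^2 + 2*(b-c)^2 + (a-c)^2" by simp
  thus ?thesis by (simp add: power2_eq_square algebra_simps)
qed

lemma sq_le_of_sqrt: fixes x y k :: real assumes "sqrt x \<le> k * sqrt y" "0 \<le> x" "0 \<le> y"
  shows "x \<le> k^2 * y"
proof (cases "k \<ge> 0")
  case True
  have "0 \<le> sqrt x" using assms(2) by simp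
  hence "(sqrt x)^2 \<le> (k * sqrt y)^2" by (rule power_mono[OF assms(1)])
  moreover have "(sqrt x)^2 = x" using assms(2) by simp
  moreover have "(k * sqrt y)^2 = k^2 * y" using assms(3) by (simp add: power_mult_distrib)
  ultimately show ?thesis by simp
next
  case False
  have "k * sqrt y \<le> 0" using False assms(3) by (simp add: mult_nonpos_nonneg)
  hence "sqrt x \<le> 0" using assms(1) by linarith
  hence "x = 0" using assms(2) by simp
  thus ?thesis using assms(3) by simp
qed

lemma Kmin_le:
  fixes K :: "'a::real_inner \<Rightarrow> 'a"
  assumes "bounded_linear K"
  shows "Kmin K * (norm x)^2 \<le> K x \<bullet> x"
proof (cases "x = 0")
  case True
  then show ?thesis using assms by (simp add: linear_simps)
next
  case False
  obtain B where B: "\<And>y. norm (K y) \<le> norm y * B" "B > 0"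
    using bounded_linear.pos_bounded[OF assms] by blast
  have bdd: "bdd_below {(K y \<bullet> y) / (norm y)\<^sup>2 | y. y \<noteq> 0}"
  proof (rule bdd_belowI[where m="-B"])
    fix z assume "z \<in> {(K y \<bullet> y) / (norm y)\<^sup>2 | y. y \<noteq> 0}"
    then obtain y where y: "y \<noteq> 0" "z = (K y \<bullet> y) / (norm y)\<^sup>2" by blast
    have "\<bar>K y \<bullet> y\<bar> \<le> norm (K y) * norm y" by (rule Cauchy_Schwarz_ineq2)
    also have "\<dots> \<le> norm y * B * norm y" using B(1)[of y] by (simp add: mult_right_mono)
    finally have "- (B * (norm y)^2) \<le> K y \<bullet> y" by (simp add: power2_eq_square algebra_simps)
    hence "- (B * (norm y)^2) / (norm y)^2 \<le> (K y \<bullet> y) / (norm y)^2"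
      by (rule divide_right_mono) simp
    moreover have "- (B * (norm y)^2) / (norm y)^2 = - B" using y by simp
    ultimately show "- B \<le> z" using y by simp
  qed
  have "Kmin K \<le> (K x \<bullet> x) / (norm x)\<^sup>2"
    unfolding Kmin_def by (rule cInf_lower) (use False bdd in auto)
  thus ?thesis using False by (simp add: pos_le_divide_eq)
qed

lemma aGam_self: "aGam Tf Tp Nn g w w = 0"
  by (simp add: aGam_def inner_commute)

lemma lin_ipS: "linear Ef \<Longrightarrow> linear Ep \<Longrightarrow> linear (\<lambda>x. ipS Ef Ep g S x v)"
  by (rule linearI) (simp_all add: ipS_def linear_add linear_scale inner_add_left algebra_simps)

lemma lin_aform: "linear Df \<Longrightarrow> linear Dp \<Longrightarrow> linear K \<Longrightarrow> linear Tf \<Longrightarrow> linear Tt \<Longrightarrow>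
   linear (\<lambda>x. aform Df Dp K Tf Tt \<nu> g \<alpha> x v)"
  by (rule linearI) (simp_all add: aform_def linear_add linear_scale inner_add_left algebra_simps)

lemma lin_aGam: "linear Tf \<Longrightarrow> linear Tp \<Longrightarrow> linear Nn \<Longrightarrow> linear (\<lambda>x. aGam Tf Tp Nn g x v)"
  by (rule linearI) (simp_all add: aGam_def linear_add linear_scale inner_add_left algebra_simps)

lemma lin_ast: "linear Tf \<Longrightarrow> linear Tp \<Longrightarrow> linear Nn \<Longrightarrow> linear (\<lambda>x. ast Tf Tp Nn \<gamma>f \<gamma>p x v)"
  by (rule linearI) (simp_all add: ast_def linear_add linear_scale inner_add_left algebra_simps)

lemma lin_ipF: "linear (\<lambda>f. ipF Ef Ep g f v)"
  by (rule linearI) (simp_all add: ipF_def inner_add_left algebra_simps)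

lemma lin_pair: "linear A \<Longrightarrow> linear B \<Longrightarrow> linear (\<lambda>x. (A (fst x), B (snd x)))"
  by (rule linearI) (simp_all add: linear_add linear_scale)

lemma ipS_eq: "0 \<le> g*S \<Longrightarrow> ipS Ef Ep g S x y = (Ef (fst x), sqrt (g*S) *\<^sub>R Ep (snd x)) \<bullet> (Ef (fst y), sqrt (g*S) *\<^sub>R Ep (snd y))"
  by (simp add: ipS_def)

lemma nrm_eq: "nrm2 Ef Ep w = (norm (Ef (fst w), Ep (snd w)))^2"
  by (simp add: nrm2_def norm_Pair)
lemma gnrm_eq: "gnrm2 Df Dp w = (norm (Df (fst w), Dp (snd w)))^2"
  by (simp add: gnrm2_def norm_Pair)
lemma tnrm_eq: "tnrm2 Tf Tp w = (norm (Tf (fst w), Tp (snd w)))^2"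
  by (simp add: tnrm2_def norm_Pair)

lemma ipS_le: assumes "0 \<le> g*S" shows "ipS Ef Ep g S w w \<le> max 1 (g*S) * nrm2 Ef Ep w"
proof -
  have "ipS Ef Ep g S w w = (norm (Ef (fst w)))^2 + g*S*(norm (Ep (snd w)))^2"
    by (simp add: ipS_def power2_norm_eq_inner)
  also have "\<dots> \<le> max 1 (g*S) * (norm (Ef (fst w)))^2 + max 1 (g*S) *(norm (Ep (snd w)))^2"
    using mult_right_mono[of 1 "max 1 (g*S)" "(norm (Ef (fst w)))^2"]
      mult_right_mono[of "g*S" "max 1 (g*S)" "(norm (Ep (snd w)))^2"] by simp
  finally show ?thesis by (simp add: nrm2_def algebra_simps)
qed

lemma ipS_nonneg: "0 \<le> g*S \<Longrightarrow> 0 \<le> ipS Ef Ep g S w w"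
  by (simp add: ipS_def)

lemma ipF_le: "ipF Ef Ep g df w \<le> sqrt (max 1 (g^2) * fnrm2 df) * sqrt (nrm2 Ef Ep w)"
proof -
  have "ipF Ef Ep g df w = (fst df, g *\<^sub>R snd df) \<bullet> (Ef (fst w), Ep (snd w))"
    by (simp add: ipF_def)
  also have "\<dots> \<le> norm (fst df, g *\<^sub>R snd df) * norm (Ef (fst w), Ep (snd w))"
    by (rule norm_cauchy_schwarz)
  also have "norm (fst df, g *\<^sub>R snd df) \<le> sqrt (max 1 (g^2) * fnrm2 df)"
  proof -
    have "(norm (fst df))^2 + g^2 * (norm (snd df))^2 \<le> max 1 (g^2) * (norm (fst df))^2 + max 1 (g^2) * (norm (snd df))^2"
      using mult_right_mono[of 1 "max 1 (g^2)" "(norm (fst df))^2"]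
        mult_right_mono[of "g^2" "max 1 (g^2)" "(norm (snd df))^2"] by simp
    thus ?thesis by (simp add: norm_Pair fnrm2_def power_mult_distrib algebra_simps)
  qed
  hence "norm (fst df, g *\<^sub>R snd df) * norm (Ef (fst w), Ep (snd w)) \<le> sqrt (max 1 (g^2) * fnrm2 df) * norm (Ef (fst w), Ep (snd w))"
    by (simp add: mult_right_mono)
  finally show ?thesis by (simp add: nrm_eq)
qed

lemma aform_ge:
  assumes "bounded_linear K" "0 < \<nu>" "0 < g" "0 \<le> \<alpha>"
  shows "min \<nu> (g * Kmin K) * gnrm2 Df Dp w \<le> aform Df Dp K Tf Tt \<nu> g \<alpha> w w"
proof -
  have k: "Kmin K * (norm (Dp (snd w)))^2 \<le> K (Dp (snd w)) \<bullet> Dp (snd w)"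
    by (rule Kmin_le[OF assms(1)])
  have "min \<nu> (g * Kmin K) * gnrm2 Df Dp w
     \<le> \<nu> * (norm (Df (fst w)))^2 + (g * Kmin K) * (norm (Dp (snd w)))^2"
    unfolding gnrm2_def distrib_left
    by (intro add_mono mult_right_mono) auto
  also have "\<dots> \<le> \<nu> * (norm (Df (fst w)))^2 + g * (K (Dp (snd w)) \<bullet> Dp (snd w))"
    using mult_left_mono[OF k, of g] assms by (simp add: algebra_simps)
  also have "\<dots> \<le> aform Df Dp K Tf Tt \<nu> g \<alpha> w w"
    using assms by (simp add: aform_def power2_norm_eq_inner)
  finally show ?thesis .
qed

lemma real_aux4:
  fixes x1 x2 y1 y2 g a b M :: real
  assumes "0\<le>x1" "0\<le>x2" "0\<le>y1" "0\<le>y2" "g \<le> M" "a \<le> M" "b \<le> M" "0\<le>g" "0\<le>a" "0\<le>b"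
  shows "g*x2*y1 + g*x1*y2 + a*x1*y1 + b*x2*y2 \<le> M*(x1+x2)*(y1+y2)"
proof -
  have "0 \<le> (M-g)*(x2*y1) + (M-g)*(x1*y2) + (M-a)*(x1*y1) + (M-b)*(x2*y2)"
    using assms by (intro add_nonneg_nonneg mult_nonneg_nonneg) auto
  thus ?thesis by (simp add: algebra_simps)
qed

lemma sum_sqrt2: fixes p q :: real assumes "0 \<le> p" "0 \<le> q"
  shows "p + q \<le> sqrt 2 * sqrt (p^2 + q^2)"
proof -
  have "(p+q)^2 \<le> 2*(p^2+q^2)"
  proof -
    have "0 \<le> (p-q)^2" by simp
    thus ?thesis by (simp add: power2_eq_square algebra_simps)
  qed
  hence "sqrt ((p+q)^2) \<le> sqrt (2*(p^2+q^2))" by (rule real_sqrt_le_mono)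
  also have "sqrt (2*(p^2+q^2)) = sqrt 2 * sqrt (p^2+q^2)" by (rule real_sqrt_mult)
  also have "sqrt ((p+q)^2) = p + q" using assms by simp
  finally show ?thesis by simp
qed

lemma aGst_le:
  assumes frame: "\<And>w. (norm (Nn w))\<^sup>2 + (norm (Tt w))\<^sup>2 = (norm w)\<^sup>2"
    and "0 < g" "0 \<le> \<gamma>f" "0 \<le> \<gamma>p" "g \<le> M" "\<gamma>f \<le> M" "\<gamma>p \<le> M"
  shows "aGam Tf Tp Nn g d w - ast Tf Tp Nn \<gamma>f \<gamma>p d w
     \<le> 2*M* sqrt (tnrm2 Tf Tp d) * sqrt (tnrm2 Tf Tp w)"
proof -
  have fr: "norm (Nn x) \<le> norm x" for x
  proof -
    have "(norm (Nn x))^2 \<le> (norm x)^2" using frame[of x] by (smt (verit) zero_le_power2)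
    thus ?thesis by (simp add: power2_le_iff_abs_le)
  qed
  define a1 where "a1 = Nn (Tf (fst d))"
  define a2 where "a2 = Tp (snd d)"
  define b1 where "b1 = Nn (Tf (fst w))"
  define b2 where "b2 = Tp (snd w)"
  have e: "aGam Tf Tp Nn g d w - ast Tf Tp Nn \<gamma>f \<gamma>p d w
      = g*(a2 \<bullet> b1) - g*(a1 \<bullet> b2) - \<gamma>f*(a1 \<bullet> b1) - \<gamma>p*(a2 \<bullet> b2)"
    by (simp add: aGam_def ast_def a1_def a2_def b1_def b2_def)
  have "g*(a2 \<bullet> b1) - g*(a1 \<bullet> b2) - \<gamma>f*(a1 \<bullet> b1) - \<gamma>p*(a2 \<bullet> b2)
     \<le> g*(norm a2*norm b1) + g*(norm a1*norm b2) + \<gamma>f*(norm a1*norm b1) + \<gamma>p*(norm a2*norm b2)"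
  proof -
    have "g*(a2 \<bullet> b1) \<le> g*(norm a2*norm b1)" using Cauchy_Schwarz_ineq2[of a2 b1] assms(2) by (intro mult_left_mono) auto
    moreover have "- (g*(a1 \<bullet> b2)) \<le> g*(norm a1*norm b2)" using mult_left_mono[of "-(a1 \<bullet> b2)" "norm a1 * norm b2" "g"] Cauchy_Schwarz_ineq2[of a1 b2] assms(2)
      by (auto simp: abs_le_iff)
    moreover have "- (\<gamma>f*(a1 \<bullet> b1)) \<le> \<gamma>f*(norm a1*norm b1)" using mult_left_mono[of "-(a1 \<bullet> b1)" "norm a1 * norm b1" "\<gamma>f"] Cauchy_Schwarz_ineq2[of a1 b1] assms(3)
      by (auto simp: abs_le_iff)
    moreover have "- (\<gamma>p*(a2 \<bullet> b2)) \<le> \<gamma>p*(norm a2*norm b2)" using mult_left_mono[of "-(a2 \<bullet> b2)" "norm a2 * norm b2" "\<gamma>p"] Cauchy_Schwarz_ineq2[of a2 b2] assms(4)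
      by (auto simp: abs_le_iff)
    ultimately show ?thesis by linarith
  qed
  also have "\<dots> \<le> M*(norm a1 + norm a2)*(norm b1 + norm b2)"
    using real_aux4[of "norm a1" "norm a2" "norm b1" "norm b2" g M \<gamma>f \<gamma>p] assms by (simp add: algebra_simps)
  also have "\<dots> \<le> M*(sqrt 2 * sqrt (tnrm2 Tf Tp d))*(sqrt 2 * sqrt (tnrm2 Tf Tp w))"
  proof -
    have "norm a1 + norm a2 \<le> norm (Tf (fst d)) + norm (Tp (snd d))" using fr a1_def a2_def by simp
    also have "\<dots> \<le> sqrt 2 * sqrt (tnrm2 Tf Tp d)" unfolding tnrm2_def by (rule sum_sqrt2) auto
    finally have h1: "norm a1 + norm a2 \<le> sqrt 2 * sqrt (tnrm2 Tf Tp d)" .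
    have "norm b1 + norm b2 \<le> norm (Tf (fst w)) + norm (Tp (snd w))" using fr b1_def b2_def by simp
    also have "\<dots> \<le> sqrt 2 * sqrt (tnrm2 Tf Tp w)" unfolding tnrm2_def by (rule sum_sqrt2) auto
    finally have h2: "norm b1 + norm b2 \<le> sqrt 2 * sqrt (tnrm2 Tf Tp w)" .
    have M0: "0 \<le> M" using assms by linarith
    have t0: "0 \<le> tnrm2 Tf Tp d" by (simp add: tnrm2_def)
    show ?thesis
      using t0 mult_mono[OF mult_left_mono[OF h1 M0] h2] M0 by (simp add: mult.assoc)
  qed
  also have "\<dots> = 2*M* sqrt (tnrm2 Tf Tp d) * sqrt (tnrm2 Tf Tp w)"
    by (simp add: algebra_simps)
  finally show ?thesis using e by simp
qed

lemma step_real: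
  fixes Q aww F R Nd E0 E1 G0 G1 G2 td tw nd gd phi Ca M Ctr CS dt cF :: real
  assumes hQ: "2*Q = E0 - E1 + Nd"
    and heq: "Q/(2*dt) + aww = F + R"
    and ha: "Ca*G0 \<le> aww"
    and hF: "F \<le> Ca/4*G0 + cF*phi"
    and hR: "R \<le> 2*M*td*tw"
    and htd: "td^2 \<le> Ctr^2*(nd*gd)" and htw: "tw^2 \<le> Ctr^2*G0"
    and hnd: "nd^2 \<le> CS^2*Nd" and hgd: "gd^2 \<le> 4*(G0+2*G1+G2)"
    and nn: "0\<le>td" "0\<le>tw" "0\<le>nd" "0\<le>gd" "0\<le>G0" "0 \<le> Nd"
    and hdt: "1024*M^4*Ctr^8*CS^2*dt \<le> Ca^3" "0<dt" "0<Ca" "0<M" "Ctr \<noteq> 0"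
  shows "(E0 - E1)/(4*dt) \<le> -(7/16)*Ca*G0 + (2/16)*Ca*G1 + (1/16)*Ca*G2 + cF*phi"
proof -
  define c2 where "c2 = Ctr^2"
  have c2: "0 < c2" using hdt by (simp add: c2_def)
  have r1: "tw * (2*M*td) \<le> (Ca/(4*c2))*tw^2 + (2*M*td)^2/(4*(Ca/(4*c2)))"
    by (rule young) (use c2 hdt in simp)
  have r2: "(2*M*td)^2/(4*(Ca/(4*c2))) = (4*M^2*c2/Ca)*td^2"
    using c2 hdt by (simp add: field_simps power2_eq_square)
  have r3: "(Ca/(4*c2))*tw^2 \<le> Ca/4*G0"
  proof -
    have "(Ca/(4*c2))*tw^2 \<le> (Ca/(4*c2))*(c2*G0)"
      using htw c2 hdt by (intro mult_left_mono) (auto simp: c2_def)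
    thus ?thesis using c2 by simp
  qed
  define K where "K = 4*M^2*c2^2/Ca"
  have K0: "0 \<le> K" using hdt by (simp add: K_def)
  have r4: "(4*M^2*c2/Ca)*td^2 \<le> K*(nd*gd)"
  proof -
    have "(4*M^2*c2/Ca)*td^2 \<le> (4*M^2*c2/Ca)*(c2*(nd*gd))"
      using htd c2 hdt by (intro mult_left_mono) (auto simp: c2_def)
    thus ?thesis by (simp add: K_def power2_eq_square)
  qed
  define \<eta> where "\<eta> = Ca^2/(256*M^2*c2^2)"
  have eta: "0 < \<eta>" using hdt c2 by (simp add: \<eta>_def)
  have r5: "gd*nd \<le> \<eta>*gd^2 + nd^2/(4*\<eta>)" by (rule young[OF eta])
  have r6: "K*(\<eta>*gd^2) \<le> Ca/16*(G0+2*G1+G2)"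
  proof -
    have "K*\<eta> = Ca/64" using hdt c2 by (simp add: K_def \<eta>_def field_simps power2_eq_square)
    hence "K*(\<eta>*gd^2) = Ca/64 * gd^2" by (simp add: mult.assoc[symmetric])
    also have "\<dots> \<le> Ca/64 * (4*(G0+2*G1+G2))" using hgd hdt by (intro mult_left_mono) auto
    finally show ?thesis by linarith
  qed
  have r7: "K*(nd^2/(4*\<eta>)) \<le> Nd/(4*dt)"
  proof -
    have e1: "K*(nd^2/(4*\<eta>)) = (256*M^4*c2^4/Ca^3) * nd^2"
      unfolding K_def \<eta>_def using hdt c2 by (simp add: field_simps power2_eq_square power3_eq_cube power4_eq_xxxx)
    have "(256*M^4*c2^4/Ca^3) * nd^2 \<le> (256*M^4*c2^4/Ca^3) * (CS^2*Nd)"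
      using hnd hdt by (intro mult_left_mono) auto
    also have "\<dots> \<le> Nd/(4*dt)"
    proof -
      have "c2^4 = Ctr^8" by (simp add: c2_def power_mult[symmetric])
      hence "(256*M^4*c2^4*CS^2)*(4*dt) \<le> Ca^3" using hdt(1) by (simp add: algebra_simps)
      hence "(256*M^4*c2^4*CS^2)*(4*dt) * Nd \<le> Ca^3 * Nd" using nn(6) by (rule mult_right_mono)
      thus ?thesis using hdt by (simp add: field_simps)
    qed
    finally show ?thesis using e1 by simp
  qed
  have Rb: "R \<le> Ca/4*G0 + Ca/16*(G0+2*G1+G2) + Nd/(4*dt)"
  proof -
    have "R \<le> tw * (2*M*td)" using hR by (simp add: algebra_simps)
    also have "\<dots> \<le> Ca/4*G0 + K*(nd*gd)" using r1 r2 r3 r4 by linarith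
    also have "K*(nd*gd) \<le> K*(\<eta>*gd^2) + K*(nd^2/(4*\<eta>))"
      using mult_left_mono[OF r5 K0] by (simp add: algebra_simps)
    finally show ?thesis using r6 r7 by linarith
  qed
  have "Q/(2*dt) = (E0 - E1)/(4*dt) + Nd/(4*dt)" using hQ hdt by (simp add: field_simps)
  hence "(E0 - E1)/(4*dt) = F + R - aww - Nd/(4*dt)" using heq by simp
  moreover have "Ca/4*G0 = (1/4)*(Ca*G0)" "Ca/16*(G0+2*G1+G2) = (1/16)*(Ca*G0) + (2/16)*(Ca*G1) + (1/16)*(Ca*G2)"
    "-(7/16)*Ca*G0 = -(7/16)*(Ca*G0)" "(2/16)*Ca*G1 = (2/16)*(Ca*G1)" "(1/16)*Ca*G2 = (1/16)*(Ca*G2)"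
    by (simp_all add: algebra_simps)
  ultimately show ?thesis using ha hF Rb by linarith
qed

lemma seq_decay:
  fixes \<Psi> \<phi> m :: "nat \<Rightarrow> real"
  assumes st: "\<And>n. n \<ge> 2 \<Longrightarrow> \<Psi> n \<le> \<rho> * \<Psi> (n-1) + c * \<phi> n"
    and ph: "\<And>n. n \<ge> 2 \<Longrightarrow> \<phi> n \<le> m n" and mm: "\<And>n. n \<ge> 1 \<Longrightarrow> m n \<le> m (Suc n)"
    and m0: "\<And>n. n \<ge> 1 \<Longrightarrow> 0 \<le> m n"
    and r: "0 \<le> \<rho>" "\<rho> < 1" and c: "0 \<le> c"
  shows "n \<ge> 1 \<Longrightarrow> \<Psi> n \<le> \<rho>^(n-1) * \<Psi> 1 + c * m n / (1 - \<rho>)"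
proof (induction n rule: dec_induct)
  case base
  have "0 \<le> c * m 1 / (1 - \<rho>)" using c m0[of 1] r by simp
  thus ?case by simp
next
  case (step k)
  have "\<Psi> (Suc k) \<le> \<rho> * \<Psi> k + c * \<phi> (Suc k)" using st[of "Suc k"] step by simp
  also have "\<dots> \<le> \<rho> * (\<rho>^(k-1) * \<Psi> 1 + c * m k / (1 - \<rho>)) + c * m (Suc k)"
    using step r c ph[of "Suc k"] by (intro add_mono mult_left_mono) auto
  also have "\<dots> \<le> \<rho>^k * \<Psi> 1 + c * m (Suc k) / (1 - \<rho>)"
  proof -
    have "\<rho> * \<rho>^(k-1) = \<rho>^k" using step by (cases k) auto
    moreover have "\<rho> * (c * m k / (1 - \<rho>)) + c * m (Suc k) \<le> c * m (Suc k) / (1 - \<rho>)"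
    proof -
      have "\<rho> * (c * m k) \<le> \<rho> * (c * m (Suc k))" using mm[of k] step r c by (intro mult_left_mono) auto
      moreover have "(1-\<rho>) * (c * m (Suc k)) = c * m (Suc k) - \<rho> * (c * m (Suc k))" by (simp add: algebra_simps)
      ultimately have "\<rho> * (c * m k) + (1-\<rho>) * (c * m (Suc k)) \<le> c * m (Suc k)" by linarith
      moreover have "(\<rho> * (c * m k / (1 - \<rho>)) + c * m (Suc k)) * (1-\<rho>) = \<rho> * (c * m k) + (1-\<rho>) * (c * m (Suc k))"
        using r by (simp add: field_simps)
      ultimately have "(\<rho> * (c * m k / (1 - \<rho>)) + c * m (Suc k)) * (1-\<rho>) \<le> c * m (Suc k)" by linarith
      thus ?thesis using r by (simp add: pos_le_divide_eq)
    qed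
    moreover have "\<rho> * (\<rho>^(k-1) * \<Psi> 1 + c * m k / (1 - \<rho>)) = \<rho>^k * \<Psi> 1 + \<rho> * (c * m k / (1 - \<rho>))"
      using calculation(1) by (simp only: distrib_left mult.assoc[symmetric])
    ultimately show ?thesis by linarith
  qed
  finally show ?case by simp
qed

lemma norm_sq_2: fixes x y :: "'a::real_inner"
  shows "(norm (2 *\<^sub>R x - y))^2 \<le> 8*(norm x)^2 + 2*(norm y)^2"
proof -
  have "0 \<le> (norm (2 *\<^sub>R x + y))^2" by simp
  thus ?thesis by (simp add: power2_norm_eq_inner inner_simps inner_commute algebra_simps)
qed

lemma fnrm2_scale: "fnrm2 (c *\<^sub>R x) = c^2 * fnrm2 x"
  by (simp add: fnrm2_def power_mult_distrib algebra_simps)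

lemma nrm2_scale: "linear Ef \<Longrightarrow> linear Ep \<Longrightarrow> nrm2 Ef Ep (c *\<^sub>R x) = c^2 * nrm2 Ef Ep x"
  by (simp add: nrm2_def linear_scale power_mult_distrib algebra_simps)

lemma gnorm_tri: 
  assumes "linear W"
  shows "(norm (W (a - 2 *\<^sub>R b + c)))^2 \<le> 4*((norm (W a))^2 + 2*(norm (W b))^2 + (norm (W c))^2)"
proof -
  have e: "W (a - 2 *\<^sub>R b + c) = W a - 2 *\<^sub>R W b + W c"
    using assms by (simp add: linear_add linear_diff linear_scale)
  have "norm (W a - 2 *\<^sub>R W b + W c) \<le> norm (W a) + 2 * norm (W b) + norm (W c)"
  proof -
    have "norm (W a - 2 *\<^sub>R W b + W c) \<le> norm (W a - 2 *\<^sub>R W b) + norm (W c)" by (rule norm_triangle_ineq)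
    also have "norm (W a - 2 *\<^sub>R W b) \<le> norm (W a) + norm (2 *\<^sub>R W b)" by (rule norm_triangle_ineq4)
    finally show ?thesis by simp
  qed
  hence "(norm (W a - 2 *\<^sub>R W b + W c))^2 \<le> (norm (W a) + 2 * norm (W b) + norm (W c))^2"
    by (rule power_mono) simp
  also have "\<dots> \<le> 4*((norm (W a))^2 + 2*(norm (W b))^2 + (norm (W c))^2)" by (rule tri4)
  finally show ?thesis using e by simp
qed

lemma lin_V: "linear Ef \<Longrightarrow> linear Ep \<Longrightarrow> linear (\<lambda>x. (Ef (fst x), r *\<^sub>R Ep (snd x)))"
  by (rule linearI) (simp_all add: linear_add linear_scale algebra_simps)

theorem lemma4p1:
  fixes Ef :: "'hf::real_vector \<Rightarrow> 'lf::real_inner"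
    and Ep :: "'hp::real_vector \<Rightarrow> 'lp::real_inner"
    and Df :: "'hf \<Rightarrow> 'gf::real_inner"
    and Dp :: "'hp \<Rightarrow> 'gp::real_inner"
    and K :: "'gp \<Rightarrow> 'gp"
    and Tf :: "'hf \<Rightarrow> 'tv::real_inner"
    and Tp :: "'hp \<Rightarrow> 'tp::real_inner"
    and Nn :: "'tv \<Rightarrow> 'tp"
    and Tt :: "'tv \<Rightarrow> 'tt::real_inner"
    and Dv :: "'hf \<Rightarrow> 'q::real_inner"
    and \<nu> g S \<alpha> \<gamma>f \<gamma>p CS Ctr dt :: real
  assumes lin: "linear Ef" "linear Ep" "linear Df" "linear Dp" "linear Tf" "linear Tp"
      "linear Nn" "linear Tt" "linear Dv"
    and inj: "inj Ef" "inj Ep"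
    and K_bl: "bounded_linear K"
    and K_sym: "\<And>x y. K x \<bullet> y = x \<bullet> K y"
    and K_pd: "Kmin K > 0"
    and frame: "\<And>w. (norm (Nn w))\<^sup>2 + (norm (Tt w))\<^sup>2 = (norm w)\<^sup>2"
    and poincare: "\<exists>CP. \<forall>w. nrm2 Ef Ep w \<le> CP * gnrm2 Df Dp w"
    and par: "\<nu> > 0" "g > 0" "S > 0" "\<alpha> > 0" "\<gamma>f \<ge> 0" "\<gamma>p \<ge> 0"
    and CS: "\<And>w. sqrt (nrm2 Ef Ep w) \<le> CS * sqrt (ipS Ef Ep g S w w)"
    and Ctr1: "\<And>w. sqrt (tnrm2 Tf Tp w) \<le> Ctr * sqrt (sqrt (nrm2 Ef Ep w) * sqrt (gnrm2 Df Dp w))"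
    and Ctr2: "\<And>w. sqrt (tnrm2 Tf Tp w) \<le> Ctr * sqrt (gnrm2 Df Dp w)"
    and dt: "0 < dt"
      "dt \<le> (min \<nu> (g * Kmin K)) ^ 3
              / (536 * CS\<^sup>2 * (sqrt 2 * Max {\<gamma>f, \<gamma>p, g}) ^ 4 * Ctr ^ 8)"
  shows "\<exists>lam1. 0 < lam1 \<and> lam1 < 1 \<and>
    (\<forall>(u :: nat \<Rightarrow> 'hf \<times> 'hp) (p :: nat \<Rightarrow> 'q) (f :: nat \<Rightarrow> 'lf \<times> 'lp).
       (\<forall>n\<ge>1. (\<forall>v.
           ipS Ef Ep g S ((1 / (2 * dt)) *\<^sub>R (3 *\<^sub>R u (n+1) - 4 *\<^sub>R u n + u (n-1))) v
           + aform Df Dp K Tf Tt \<nu> g \<alpha> (u (n+1)) v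
           + bform Dv (fst v) (p (n+1))
           + ast Tf Tp Nn \<gamma>f \<gamma>p (u (n+1)) v
           = ipF Ef Ep g (f (n+1)) v
             - (aGam Tf Tp Nn g (2 *\<^sub>R u n - u (n-1)) v
                - ast Tf Tp Nn \<gamma>f \<gamma>p (2 *\<^sub>R u n - u (n-1)) v))
         \<and> (\<forall>q. bform Dv (fst (u (n+1))) q = 0))
       \<longrightarrow> (\<exists>C. \<forall>n\<ge>1.
             nrm2 Ef Ep ((1 / dt) *\<^sub>R (u (n+1) - u n))
               \<le> C * lam1 ^ n
                  + C * Max ((\<lambda>i. fnrm2 ((1 / dt) *\<^sub>R (f i - f (i-1)))) ` {2..n+1})))"
proof -
  obtain CP0 where CP0: "\<forall>w. nrm2 Ef Ep w \<le> CP0 * gnrm2 Df Dp w" using poincare by blast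
  define CP where "CP = max CP0 1"
  have CP1: "1 \<le> CP" by (simp add: CP_def)
  have CPb: "nrm2 Ef Ep w \<le> CP * gnrm2 Df Dp w" for w
  proof -
    have "0 \<le> gnrm2 Df Dp w" by (simp add: gnrm2_def)
    hence "CP0 * gnrm2 Df Dp w \<le> CP * gnrm2 Df Dp w" by (intro mult_right_mono) (auto simp: CP_def)
    thus ?thesis using CP0 by (meson order_trans)
  qed
  define Ca where "Ca = min \<nu> (g * Kmin K)"
  have Ca0: "0 < Ca" using par K_pd by (simp add: Ca_def)
  define M where "M = Max {\<gamma>f, \<gamma>p, g}"
  have Meq: "M = max \<gamma>f (max \<gamma>p g)" by (simp add: M_def)
  have Mge: "\<gamma>f \<le> M" "\<gamma>p \<le> M" "g \<le> M" "0 < M" using par by (auto simp: Meq)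
  define Den where "Den = 536 * CS\<^sup>2 * (sqrt 2 * M) ^ 4 * Ctr ^ 8"
  have s4: "(sqrt 2 * M) ^ 4 = 4 * M^4"
  proof -
    have "(sqrt 2)^4 = 4" by (simp add: power4_eq_xxxx)
    thus ?thesis by (simp add: power_mult_distrib)
  qed
  have Den_eq: "Den = 2144 * (M^4 * Ctr^8 * CS^2)" unfolding Den_def s4 by (simp add: algebra_simps)
  have dt2: "dt \<le> Ca^3 / Den" using dt(2) by (simp add: Den_def Ca_def M_def)
  have Den0: "0 < Den"
  proof -
    have "0 \<le> M^4 * Ctr^8 * CS^2" by (simp add: zero_le_mult_iff zero_le_even_power)
    hence "0 \<le> Den" by (simp add: Den_eq)
    moreover have "Den \<noteq> 0" using dt2 dt(1) by auto
    ultimately show ?thesis by simp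
  qed
  have Ctr0: "Ctr \<noteq> 0" using Den0 by (auto simp: Den_def)
  have dtb: "1024*M^4*Ctr^8*CS^2*dt \<le> Ca^3"
  proof -
    have "dt * Den \<le> Ca^3" using dt2 Den0 by (simp add: pos_le_divide_eq)
    moreover have "1024*M^4*Ctr^8*CS^2*dt \<le> dt * Den"
    proof -
      have "0 \<le> M^4 * Ctr^8 * CS^2 * dt" using dt(1) by (simp add: zero_le_mult_iff zero_le_even_power)
      thus ?thesis by (simp add: Den_eq algebra_simps)
    qed
    ultimately show ?thesis by linarith
  qed
  have gS0: "0 \<le> g*S" using par by simp
  define sS where "sS = max 1 (g*S)"
  define sg where "sg = max 1 (g^2)"
  define cF where "cF = sg*CP*dt^2/Ca"
  have cF0: "0 \<le> cF" using CP1 Ca0 by (simp add: cF_def sg_def)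
  define A where "A = 9* sS *CP/(4*dt) + 3*Ca/16"
  define B where "B = 2* sS *CP/(4*dt) + Ca/16"
  define D where "D = max (A + Ca/8) B"
  have sS1: "1 \<le> sS" by (simp add: sS_def)
  have "0 \<le> 2 * sS * CP/(4*dt)" using sS1 CP1 dt(1) by simp
  hence B0: "0 < B" unfolding B_def using Ca0 by linarith
  have D0: "0 < D" using B0 by (simp add: D_def)
  define \<kappa> where "\<kappa> = Ca/(8*D)"
  have k0: "0 < \<kappa>" using Ca0 D0 by (simp add: \<kappa>_def)
  define \<rho> where "\<rho> = 1/(1+\<kappa>)"
  have r0: "0 < \<rho>" "\<rho> < 1" using k0 by (auto simp: \<rho>_def)
  show ?thesis
  proof (rule exI[of _ \<rho>], intro conjI r0 allI impI)
    fix u :: "nat \<Rightarrow> 'hf \<times> 'hp" and p :: "nat \<Rightarrow> 'q" and f :: "nat \<Rightarrow> 'lf \<times> 'lp"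
    assume H: "\<forall>n\<ge>1. (\<forall>v.
           ipS Ef Ep g S ((1 / (2 * dt)) *\<^sub>R (3 *\<^sub>R u (n+1) - 4 *\<^sub>R u n + u (n-1))) v
           + aform Df Dp K Tf Tt \<nu> g \<alpha> (u (n+1)) v
           + bform Dv (fst v) (p (n+1))
           + ast Tf Tp Nn \<gamma>f \<gamma>p (u (n+1)) v
           = ipF Ef Ep g (f (n+1)) v
             - (aGam Tf Tp Nn g (2 *\<^sub>R u n - u (n-1)) v
                - ast Tf Tp Nn \<gamma>f \<gamma>p (2 *\<^sub>R u n - u (n-1)) v))
         \<and> (\<forall>q. bform Dv (fst (u (n+1))) q = 0)"
    define w where "w k = u (Suc k) - u k" for k
    define N where "N k = ipS Ef Ep g S (w k) (w k)" for k
    define G where "G k = gnrm2 Df Dp (w k)" for k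
    define E where "E k = N k + ipS Ef Ep g S (2 *\<^sub>R w k - w (k-1)) (2 *\<^sub>R w k - w (k-1))" for k
    define \<Phi> where "\<Phi> k = E k/(4*dt) + 3/16*Ca*G k + 1/16*Ca*G (k-1)" for k
    define \<Psi> where "\<Psi> k = \<Phi> k + Ca/8*G k" for k
    define \<phi> where "\<phi> k = fnrm2 ((1/dt) *\<^sub>R (f (Suc k) - f k))" for k
    define mx where "mx n = Max ((\<lambda>i. fnrm2 ((1/dt) *\<^sub>R (f i - f (i-1)))) ` {2..n+1})" for n
    define V where "V x = (Ef (fst x), sqrt (g*S) *\<^sub>R Ep (snd x))" for x
    have linV: "linear V" unfolding V_def by (rule lin_V[OF lin(1,2)])
    have ipSV: "ipS Ef Ep g S x y = V x \<bullet> V y" for x y using gS0 by (simp add: V_def ipS_eq)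
    define W where "W x = (Df (fst x), Dp (snd x))" for x
    have linW: "linear W" unfolding W_def by (rule lin_pair[OF lin(3,4)])
    have gW: "gnrm2 Df Dp x = (norm (W x))^2" for x by (simp add: W_def gnrm_eq)
    have G0: "0 \<le> G k" for k by (simp add: G_def gnrm2_def)
    have N0: "0 \<le> N k" for k by (simp add: N_def ipS_nonneg gS0)
    have nrmN: "nrm2 Ef Ep x \<le> CS^2 * ipS Ef Ep g S x x" for x
      by (rule sq_le_of_sqrt[OF CS]) (simp_all add: nrm2_def ipS_nonneg gS0)
    have NG: "N k \<le> sS * CP * G k" for k
    proof -
      have "N k \<le> sS * nrm2 Ef Ep (w k)" unfolding N_def sS_def by (rule ipS_le[OF gS0])
      also have "\<dots> \<le> sS * (CP * G k)" unfolding G_def by (intro mult_left_mono CPb) (simp add: sS_def)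
      finally show ?thesis by simp
    qed
    have div0: "Dv (fst (u j)) = 0" if "j \<ge> 2" for j
    proof -
      define i where "i = j - 1"
      have i: "j = i + 1" "i \<ge> 1" using that by (simp_all add: i_def)
      have "\<forall>q. bform Dv (fst (u (i+1))) q = 0" using conjunct2[OF H[rule_format, OF i(2)]] .
      hence "bform Dv (fst (u j)) (Dv (fst (u j))) = 0" using i(1) by simp
      thus ?thesis by (simp add: bform_def)
    qed
    have Hall: "ipS Ef Ep g S ((1 / (2 * dt)) *\<^sub>R (3 *\<^sub>R u (m+1) - 4 *\<^sub>R u m + u (m-1))) v
           + aform Df Dp K Tf Tt \<nu> g \<alpha> (u (m+1)) v
           + bform Dv (fst v) (p (m+1))
           + ast Tf Tp Nn \<gamma>f \<gamma>p (u (m+1)) v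
           = ipF Ef Ep g (f (m+1)) v
             - (aGam Tf Tp Nn g (2 *\<^sub>R u m - u (m-1)) v
                - ast Tf Tp Nn \<gamma>f \<gamma>p (2 *\<^sub>R u m - u (m-1)) v)" if "m \<ge> 1" for m v
      using conjunct1[OF H[rule_format, OF that]] by (rule spec)
    have stepE: "(E n - E (n-1))/(4*dt) \<le> -(7/16)*Ca*G n + (2/16)*Ca*G (n-1) + (1/16)*Ca*G (n-2) + cF*\<phi> n"
      if n2: "n \<ge> 2" for n
    proof -
      define k where "k = n - 2"
      have nk: "n = Suc (Suc k)" using n2 by (simp add: k_def)
      define a where "a = w n"
      define b where "b = w (n-1)"
      define c0 where "c0 = w (n-2)"
      define \<delta> where "\<delta> = a - 2 *\<^sub>R b + c0"
      define u0 where "u0 = u k"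
      define u1 where "u1 = u (Suc k)"
      define u2 where "u2 = u (Suc (Suc k))"
      define u3 where "u3 = u (Suc (Suc (Suc k)))"
      have abc: "a = u3 - u2" "b = u2 - u1" "c0 = u1 - u0"
        by (simp_all add: a_def b_def c0_def w_def nk u0_def u1_def u2_def u3_def)
      have diva: "Dv (fst a) = 0"
      proof -
        have "Dv (fst a) = Dv (fst u3) - Dv (fst u2)" using abc(1) by (simp add: linear_diff[OF lin(9)])
        moreover have "Dv (fst u3) = 0" unfolding u3_def by (rule div0) simp
        moreover have "Dv (fst u2) = 0" unfolding u2_def by (rule div0) simp
        ultimately show ?thesis by simp
      qed
      define LS where "LS x = ipS Ef Ep g S x a" for x
      define LA where "LA x = aform Df Dp K Tf Tt \<nu> g \<alpha> x a" for x
      define LG where "LG x = aGam Tf Tp Nn g x a" for x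
      define LT where "LT x = ast Tf Tp Nn \<gamma>f \<gamma>p x a" for x
      define LF where "LF y = ipF Ef Ep g y a" for y
      have linK: "linear K" using K_bl by (rule bounded_linear.linear)
      have lLS: "linear LS" unfolding LS_def by (rule lin_ipS[OF lin(1,2)])
      have lLA: "linear LA" unfolding LA_def by (rule lin_aform[OF lin(3,4) linK lin(5,8)])
      have lLG: "linear LG" unfolding LG_def by (rule lin_aGam[OF lin(5,6,7)])
      have lLT: "linear LT" unfolding LT_def by (rule lin_ast[OF lin(5,6,7)])
      have lLF: "linear LF" unfolding LF_def by (rule lin_ipF)
      have bz: "bform Dv (fst a) q = 0" for q by (simp add: bform_def diva)
      have Hn: "LS ((1 / (2 * dt)) *\<^sub>R (3 *\<^sub>R u3 - 4 *\<^sub>R u2 + u1)) + LA u3 + LT u3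
           = LF (f (Suc n)) - (LG (2 *\<^sub>R u2 - u1) - LT (2 *\<^sub>R u2 - u1))"
        using Hall[of "Suc (Suc k)" a] bz
        by (simp add: LS_def LA_def LG_def LT_def LF_def u1_def u2_def u3_def nk)
      have Hm: "LS ((1 / (2 * dt)) *\<^sub>R (3 *\<^sub>R u2 - 4 *\<^sub>R u1 + u0)) + LA u2 + LT u2
           = LF (f n) - (LG (2 *\<^sub>R u1 - u0) - LT (2 *\<^sub>R u1 - u0))"
        using Hall[of "Suc k" a] bz
        by (simp add: LS_def LA_def LG_def LT_def LF_def u0_def u1_def u2_def nk)
      have v1: "(1 / (2 * dt)) *\<^sub>R (3 *\<^sub>R u3 - 4 *\<^sub>R u2 + u1) - (1 / (2 * dt)) *\<^sub>R (3 *\<^sub>R u2 - 4 *\<^sub>R u1 + u0)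
          = (1 / (2 * dt)) *\<^sub>R (3 *\<^sub>R a - 4 *\<^sub>R b + c0)"
      proof -
        have "(3 *\<^sub>R u3 - 4 *\<^sub>R u2 + u1) - (3 *\<^sub>R u2 - 4 *\<^sub>R u1 + u0) = 3 *\<^sub>R a - 4 *\<^sub>R b + c0"
          by (simp add: abc algebra_simps)
        thus ?thesis by (simp flip: scaleR_right_diff_distrib)
      qed
      have v2: "(2 *\<^sub>R u2 - u1) - (2 *\<^sub>R u1 - u0) = a - \<delta>"
        by (simp add: \<delta>_def abc algebra_simps)
      have v3: "u3 - u2 = a" using abc by simp
      have "LS ((1 / (2 * dt)) *\<^sub>R (3 *\<^sub>R a - 4 *\<^sub>R b + c0)) + LA a + LT a
          = LF (f (Suc n) - f n) - LG (a - \<delta>) + LT (a - \<delta>)"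
      proof -
        have "LS ((1 / (2 * dt)) *\<^sub>R (3 *\<^sub>R u3 - 4 *\<^sub>R u2 + u1)) - LS ((1 / (2 * dt)) *\<^sub>R (3 *\<^sub>R u2 - 4 *\<^sub>R u1 + u0))
              + (LA u3 - LA u2) + (LT u3 - LT u2)
            = (LF (f (Suc n)) - LF (f n)) - (LG (2 *\<^sub>R u2 - u1) - LG (2 *\<^sub>R u1 - u0))
              + (LT (2 *\<^sub>R u2 - u1) - LT (2 *\<^sub>R u1 - u0))"
          using Hn Hm by linarith
        thus ?thesis
          by (simp only: linear_diff[OF lLS, symmetric] linear_diff[OF lLA, symmetric]
              linear_diff[OF lLT, symmetric] linear_diff[OF lLF, symmetric] linear_diff[OF lLG, symmetric] v1 v2 v3)
      qed
      moreover have "LG (a - \<delta>) = - LG \<delta>"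
        using linear_diff[OF lLG, of a \<delta>] by (simp add: LG_def aGam_self)
      moreover have "LT (a - \<delta>) = LT a - LT \<delta>" by (rule linear_diff[OF lLT])
      moreover have "LS ((1 / (2 * dt)) *\<^sub>R (3 *\<^sub>R a - 4 *\<^sub>R b + c0)) = LS (3 *\<^sub>R a - 4 *\<^sub>R b + c0) / (2*dt)"
        by (simp add: linear_scale[OF lLS])
      ultimately have heq: "LS (3 *\<^sub>R a - 4 *\<^sub>R b + c0) / (2*dt) + LA a = LF (f (Suc n) - f n) + (LG \<delta> - LT \<delta>)"
        by linarith
      have ipSn: "ipS Ef Ep g S x x = (norm (V x))^2" for x by (simp add: ipSV power2_norm_eq_inner)
      have hQ: "2 * LS (3 *\<^sub>R a - 4 *\<^sub>R b + c0) = E n - E (n-1) + ipS Ef Ep g S \<delta> \<delta>"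
      proof -
        have En: "E n = (norm (V a))^2 + (norm (2 *\<^sub>R V a - V b))^2"
          by (simp add: E_def N_def ipSn a_def b_def linear_diff[OF linV] linear_scale[OF linV])
        have En1: "E (n-1) = (norm (V b))^2 + (norm (2 *\<^sub>R V b - V c0))^2"
          using nk by (simp add: E_def N_def ipSn b_def c0_def linear_diff[OF linV] linear_scale[OF linV])
        have Ed: "ipS Ef Ep g S \<delta> \<delta> = (norm (V a - 2 *\<^sub>R V b + V c0))^2"
          by (simp add: ipSn \<delta>_def linear_diff[OF linV] linear_add[OF linV] linear_scale[OF linV])
        have EL: "LS (3 *\<^sub>R a - 4 *\<^sub>R b + c0) = (3 *\<^sub>R V a - 4 *\<^sub>R V b + V c0) \<bullet> V a"
          by (simp add: LS_def ipSV linear_diff[OF linV] linear_add[OF linV] linear_scale[OF linV])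
        show ?thesis using bdf_id[of "V a" "V b" "V c0"] En En1 Ed EL by simp
      qed
      have ha: "Ca * G n \<le> LA a"
        unfolding LA_def G_def a_def Ca_def by (rule aform_ge[OF K_bl par(1) par(2)]) (use par in simp)
      have hF: "LF (f (Suc n) - f n) \<le> Ca/4 * G n + cF * \<phi> n"
      proof -
        define df where "df = f (Suc n) - f n"
        have "LF df \<le> sqrt (sg * fnrm2 df) * sqrt (nrm2 Ef Ep a)"
          unfolding LF_def sg_def by (rule ipF_le)
        also have "\<dots> = sqrt (nrm2 Ef Ep a) * sqrt (sg * fnrm2 df)" by simp
        also have "\<dots> \<le> (Ca/(4*CP)) * (sqrt (nrm2 Ef Ep a))^2 + (sqrt (sg * fnrm2 df))^2 / (4*(Ca/(4*CP)))"
          by (rule young) (use Ca0 CP1 in simp)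
        also have "(sqrt (nrm2 Ef Ep a))^2 = nrm2 Ef Ep a" by (simp add: nrm2_def)
        also have "(sqrt (sg * fnrm2 df))^2 = sg * fnrm2 df" by (simp add: fnrm2_def sg_def)
        also have "fnrm2 df = dt^2 * \<phi> n"
        proof -
          have "\<phi> n = (1/dt)^2 * fnrm2 df" by (simp add: \<phi>_def df_def fnrm2_scale)
          thus ?thesis using dt(1) by (simp add: field_simps)
        qed
        also have "sg * (dt^2 * \<phi> n) / (4*(Ca/(4*CP))) = cF * \<phi> n"
          using Ca0 CP1 by (simp add: cF_def field_simps)
        also have "(Ca/(4*CP)) * nrm2 Ef Ep a \<le> (Ca/(4*CP)) * (CP * G n)"
          using CPb[of a] Ca0 CP1 by (intro mult_left_mono) (auto simp: G_def a_def)
        also have "(Ca/(4*CP)) * (CP * G n) = Ca/4 * G n" using CP1 by simp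
        finally show ?thesis by (simp add: df_def)
      qed
      have tnn: "0 \<le> tnrm2 Tf Tp x" for x by (simp add: tnrm2_def)
      have nnn: "0 \<le> nrm2 Ef Ep x" for x by (simp add: nrm2_def)
      have gnn: "0 \<le> gnrm2 Df Dp x" for x by (simp add: gnrm2_def)
      have hR: "LG \<delta> - LT \<delta> \<le> 2*M * sqrt (tnrm2 Tf Tp \<delta>) * sqrt (tnrm2 Tf Tp a)"
        unfolding LG_def LT_def by (rule aGst_le[OF frame par(2) par(5) par(6) Mge(3) Mge(1) Mge(2)])
      have htd: "(sqrt (tnrm2 Tf Tp \<delta>))^2 \<le> Ctr^2 * (sqrt (nrm2 Ef Ep \<delta>) * sqrt (gnrm2 Df Dp \<delta>))"
        using sq_le_of_sqrt[OF Ctr1[of \<delta>]] tnn[of \<delta>] nnn[of \<delta>] gnn[of \<delta>] by simp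
      have htw: "(sqrt (tnrm2 Tf Tp a))^2 \<le> Ctr^2 * G n"
        using sq_le_of_sqrt[OF Ctr2[of a]] tnn[of a] gnn[of a] by (simp add: G_def a_def)
      have hnd: "(sqrt (nrm2 Ef Ep \<delta>))^2 \<le> CS^2 * ipS Ef Ep g S \<delta> \<delta>"
        using nrmN[of \<delta>] nnn[of \<delta>] by simp
      have hgd: "(sqrt (gnrm2 Df Dp \<delta>))^2 \<le> 4*(G n + 2*G (n-1) + G (n-2))"
        using gnorm_tri[OF linW, of a b c0] gnn[of \<delta>]
        by (simp add: gW G_def a_def b_def c0_def \<delta>_def)
      show ?thesis
        by (rule step_real[OF hQ heq ha hF hR htd htw hnd hgd _ _ _ _ _ _ dtb dt(1) Ca0 Mge(4) Ctr0])
           (simp_all add: tnn nnn gnn G0 ipS_nonneg gS0)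
    qed
    have \<phi>0: "0 \<le> \<phi> k" for k by (simp add: \<phi>_def fnrm2_def)
    have Ge: "\<Psi> n = E n/(4*dt) + 5/16*(Ca*G n) + 1/16*(Ca*G (n-1))" for n
      by (simp add: \<Psi>_def \<Phi>_def algebra_simps)
    have NE: "N n \<le> E n" for n by (simp add: E_def ipS_nonneg gS0)
    have Eup: "E n \<le> 9 * sS * CP * G n + 2 * sS * CP * G (n-1)" for n
    proof -
      have "ipS Ef Ep g S (2 *\<^sub>R w n - w (n-1)) (2 *\<^sub>R w n - w (n-1)) = (norm (2 *\<^sub>R V (w n) - V (w (n-1))))^2"
        by (simp add: ipSV power2_norm_eq_inner linear_diff[OF linV] linear_scale[OF linV])
      also have "\<dots> \<le> 8*(norm (V (w n)))^2 + 2*(norm (V (w (n-1))))^2" by (rule norm_sq_2)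
      also have "\<dots> = 8 * N n + 2 * N (n-1)" by (simp add: N_def ipSV power2_norm_eq_inner)
      finally have "E n \<le> 9 * N n + 2 * N (n-1)" by (simp add: E_def)
      also have "\<dots> \<le> 9 * (sS * CP * G n) + 2 * (sS * CP * G (n-1))"
        using NG[of n] NG[of "n-1"] by linarith
      finally show ?thesis by (simp add: algebra_simps)
    qed
    have PsiD: "\<Psi> n \<le> D * (G n + G (n-1))" for n
    proof -
      have "E n/(4*dt) \<le> (9 * sS * CP * G n + 2 * sS * CP * G (n-1))/(4*dt)"
        using Eup[of n] dt(1) by (simp add: divide_right_mono)
      also have "\<dots> = (9 * sS * CP/(4*dt)) * G n + (2 * sS * CP/(4*dt)) * G (n-1)"
        using dt(1) by (simp add: field_simps)
      finally have h: "E n/(4*dt) \<le> (9 * sS * CP/(4*dt)) * G n + (2 * sS * CP/(4*dt)) * G (n-1)" .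
      have "\<Psi> n \<le> (A + Ca/8) * G n + B * G (n-1)"
      proof -
        have "(A + Ca/8) * G n + B * G (n-1) = (9 * sS * CP/(4*dt)) * G n + (2 * sS * CP/(4*dt)) * G (n-1)
             + 5/16*(Ca*G n) + 1/16*(Ca*G (n-1))"
          by (simp add: A_def B_def algebra_simps)
        thus ?thesis using h Ge[of n] by linarith
      qed
      also have "\<dots> \<le> D * G n + D * G (n-1)"
        using G0[of n] G0[of "n-1"] by (intro add_mono mult_right_mono) (auto simp: D_def)
      finally show ?thesis by (simp add: algebra_simps)
    qed
    have Pstep: "\<Psi> n \<le> \<rho> * \<Psi> (n-1) + cF * \<phi> n" if n2: "n \<ge> 2" for n
    proof -
      have e1: "\<Psi> n + Ca/8*(G n + G (n-1)) \<le> \<Psi> (n-1) + cF * \<phi> n"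
      proof -
        have s: "(E n - E (n-1))/(4*dt) = E n/(4*dt) - E (n-1)/(4*dt)" by (simp add: diff_divide_distrib)
        have nn: "n - 1 - 1 = n - 2" by simp
        have r: "-(7/16)*Ca*G n + (2/16)*Ca*G (n-1) + (1/16)*Ca*G (n-2) = 
           -(7/16)*(Ca*G n) + (2/16)*(Ca*G (n-1)) + (1/16)*(Ca*G (n-2))" by (simp add: algebra_simps)
        have "Ca/8*(G n + G (n-1)) = 1/8*(Ca*G n) + 1/8*(Ca*G (n-1))" by (simp add: algebra_simps)
        thus ?thesis using stepE[OF n2] s r Ge[of n] Ge[of "n-1", unfolded nn] by linarith
      qed
      have "\<kappa> * \<Psi> n \<le> \<kappa> * (D * (G n + G (n-1)))" using PsiD[of n] k0 by (intro mult_left_mono) auto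
      also have "\<kappa> * (D * (G n + G (n-1))) = Ca/8*(G n + G (n-1))" using D0 by (simp add: \<kappa>_def)
      finally have "(1+\<kappa>) * \<Psi> n \<le> \<Psi> (n-1) + cF * \<phi> n" using e1 by (simp add: algebra_simps)
      hence "\<Psi> n \<le> (\<Psi> (n-1) + cF * \<phi> n) / (1+\<kappa>)" using k0 by (simp add: pos_le_divide_eq mult.commute)
      also have "\<dots> = \<rho> * \<Psi> (n-1) + \<rho> * (cF * \<phi> n)" using k0 by (simp add: \<rho>_def add_divide_distrib)
      also have "\<rho> * (cF * \<phi> n) \<le> cF * \<phi> n"
        using r0 cF0 \<phi>0[of n] mult_right_mono[of \<rho> 1 "cF * \<phi> n"] by simp
      finally show ?thesis by simp
    qed
    have fin: "finite ((\<lambda>i. fnrm2 ((1/dt) *\<^sub>R (f i - f (i-1)))) ` {2..n+1})" for n by simp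
    have mxge: "fnrm2 ((1/dt) *\<^sub>R (f i - f (i-1))) \<le> mx n" if "i \<in> {2..n+1}" for i n
      unfolding mx_def by (rule Max_ge[OF fin]) (use that in blast)
    have ph: "\<phi> n \<le> mx n" if "n \<ge> 2" for n
      using mxge[of "n+1" n] that by (simp add: \<phi>_def)
    have mm: "mx n \<le> mx (Suc n)" if "n \<ge> 1" for n
      unfolding mx_def by (rule Max_mono) (use that in auto)
    have m0: "0 \<le> mx n" if "n \<ge> 1" for n
      using mxge[of "n+1" n] that by (simp add: fnrm2_def) (smt (verit) zero_le_power2)
    have dec: "\<Psi> n \<le> \<rho>^(n-1) * \<Psi> 1 + cF * mx n / (1 - \<rho>)" if "n \<ge> 1" for n
      by (rule seq_decay[where \<phi>=\<phi>, OF Pstep ph mm m0 _ r0(2) cF0 that]) (use r0 in auto)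
    define C where "C = max (4*CS^2/dt*\<bar>\<Psi> 1\<bar>/\<rho>) (4*CS^2/dt*cF/(1-\<rho>))"
    show "\<exists>C. \<forall>n\<ge>1. nrm2 Ef Ep ((1 / dt) *\<^sub>R (u (n+1) - u n)) \<le> C * \<rho> ^ n + C * Max ((\<lambda>i. fnrm2 ((1 / dt) *\<^sub>R (f i - f (i-1)))) ` {2..n+1})"
    proof (intro exI allI impI)
      fix n :: nat assume n1: "n \<ge> 1"
      have e: "nrm2 Ef Ep ((1 / dt) *\<^sub>R (u (n+1) - u n)) = (1/dt)^2 * nrm2 Ef Ep (w n)"
        by (simp add: w_def nrm2_scale[OF lin(1,2)])
      have a1: "nrm2 Ef Ep (w n) \<le> CS^2 * N n" using nrmN[of "w n"] by (simp add: N_def)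
      have a2: "N n \<le> 4*dt*\<Psi> n"
      proof -
        have "E n/(4*dt) \<le> \<Psi> n" using Ge[of n] G0[of n] G0[of "n-1"] Ca0
          by (simp add: add_nonneg_nonneg)
        thus ?thesis using NE[of n] dt(1) by (simp add: pos_divide_le_eq mult.commute)
      qed
      have "CS^2 * N n \<le> CS^2 * (4*dt*\<Psi> n)" using a2 by (rule mult_left_mono) simp
      hence "nrm2 Ef Ep (w n) \<le> CS^2 * (4*dt*\<Psi> n)" using a1 by linarith
      hence "(1/dt)^2 * nrm2 Ef Ep (w n) \<le> (1/dt)^2 * (CS^2 * (4*dt*\<Psi> n))" by (rule mult_left_mono) simp
      also have "(1/dt)^2 * (CS^2 * (4*dt*\<Psi> n)) = (4*CS^2/dt) * \<Psi> n"
        using dt(1) by (simp add: power2_eq_square field_simps)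
      finally have h1: "nrm2 Ef Ep ((1 / dt) *\<^sub>R (u (n+1) - u n)) \<le> (4*CS^2/dt) * \<Psi> n"
        using e by simp
      define q where "q = 4*CS^2/dt"
      have q0: "0 \<le> q" using dt(1) by (simp add: q_def)
      have "q * \<Psi> n \<le> q * (\<rho>^(n-1) * \<Psi> 1 + cF * mx n / (1 - \<rho>))"
        using dec[OF n1] q0 by (rule mult_left_mono)
      also have "\<dots> = q * \<rho>^(n-1) * \<Psi> 1 + (q * cF / (1-\<rho>)) * mx n" by (simp add: algebra_simps)
      also have "q * \<rho>^(n-1) * \<Psi> 1 \<le> C * \<rho>^n"
      proof -
        have "q * \<rho>^(n-1) * \<Psi> 1 \<le> q * \<rho>^(n-1) * \<bar>\<Psi> 1\<bar>"
          using q0 r0 by (intro mult_left_mono) auto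
        also have "\<dots> = (q * \<bar>\<Psi> 1\<bar> / \<rho>) * \<rho>^n"
        proof -
          have "\<rho>^n = \<rho> * \<rho>^(n-1)" using n1 by (cases n) auto
          thus ?thesis using r0 by (simp add: field_simps)
        qed
        also have "\<dots> \<le> C * \<rho>^n" using r0 by (intro mult_right_mono) (auto simp: C_def q_def)
        finally show ?thesis .
      qed
      also have "(q * cF / (1-\<rho>)) * mx n \<le> C * mx n"
        using m0[OF n1] by (intro mult_right_mono) (auto simp: C_def q_def)
      finally have "nrm2 Ef Ep ((1 / dt) *\<^sub>R (u (n+1) - u n)) \<le> C * \<rho> ^ n + C * mx n"
        using h1 q_def by simp
      thus "nrm2 Ef Ep ((1 / dt) *\<^sub>R (u (n+1) - u n)) \<le> C * \<rho> ^ n + C * Max ((\<lambda>i. fnrm2 ((1 / dt) *\<^sub>R (f i - f (i-1)))) ` {2..n+1})"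
        by (simp add: mx_def)
    qed
  qed
qed

end
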